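(* Consider the closed-loop orbit–attitude error system described in the context, namely \[ \dot{\bm X}_e^h=\mathbf A\bm X_e^h+\mathbf A(\bm x_d^h+\bm x_{e,ss}^h)+\bm b^h\Delta S,\qquad \Delta\dot S=-(\bm\psi^b)^\top\bm\omega^b-\phi,\qquad \mathbf J\dot{\bm\omega}^b=\mathcal S(\mathbf J\bm\omega^b)\bm\omega^b+\bm u^b . \] Assume that $\bm m(t)=\hat{\bm m}$ for all $t\ge\hat t$, i.e. $\mathrm{diag}(\hat{\bm m})\mathbf R_i^b(t)\bm\xi^i(t)\ge 0$ componentwise for all $t\ge\hat t\ge 0$. Let $\mathbf Q\in\mathbb R^{4\times4}$ be symmetric positive definite, $\mathfrak R>0$, let $\mathbf P$ be the symmetric positive definite solution of the algebraic Riccati equation $\mathbf A^\top\mathbf P+\mathbf P\mathbf A-\mathbf P\bm b^h\mathfrak R^{-1}(\bm b^h)^\top\mathbf P+\mathbf Q=\mathbf 0$, and let $\bm g=\mathfrak R^{-1}\mathbf P\bm b^h\in\mathbb R^4$ be the associated LQR gain stabilizing the pair $(\mathbf A,\bm b^h)$. Define $\Delta S_d=-\bm g^\top\bm X_e^h+\overline{\Delta S}$, $\Delta S_e=\Delta S-\Delta S_d$, $\mathbf A_c=\mathbf A-\bm b^h\bm g^\top$, and \[ \Lambda=-\phi+\big[(\bm b^h)^\top\mathbf P+\bm g^\top\mathbf A_c\big]\bm X_e^h+\bm g^\top\bm b^h\,\Delta S_e . \] Let $k_s>0$ and let $\bm\omega_d^b(t)$ be a (time-differentiable) solution of the underdetermined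 linear equation \[ \Lambda-(\bm\psi^b)^\top\bm\omega_d^b+k_s\,\Delta S_e=0 \] which is compatible with the configuration condition $\bm m=\hat{\bm m}$ above. Define $\bm\omega_e^b=\bm\omega^b-\bm\omega_d^b$. Then the equilibrium point $(\bm X_e^h,\Delta S_e,\bm\omega_e^b)=(\bm 0,0,\bm 0)$ of the error dynamics $\{\dot{\bm X}_e^h,\Delta\dot S_e,\dot{\bm\omega}_e^b\}$ is asymptotically stable when the rotational dynamics is in closed loop with the control law \[ \bm u^b=-\mathcal S(\mathbf J\bm\omega^b)\bm\omega^b+\mathbf J\dot{\bm\omega}_d^b+\Delta S_e\,\bm\psi^b-\mathbf K_\omega\bm\omega_e^b , \] where $\mathbf K_\omega\in\mathbb R^{3\times3}$ is any symmetric positive definite gain matrix.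
   Context: Notation: for $\bm x\in\mathbb R^3$, $\mathcal S(\bm x)$ is the skew-symmetric matrix with $\mathcal S(\bm x)\bm y=\bm x\times\bm y$. For a vector, $\mathrm{sgn}$ acts componentwise, and $\mathrm{diag}(\bm v)$ is the diagonal matrix with diagonal $\bm v$. Attitude setting (follower spacecraft, a cuboid CubeSat): $\mathbf J\in\mathbb R^{3\times3}$ is its symmetric positive definite inertia tensor, $\bm\omega^b(t)\in\mathbb R^3$ its angular velocity in the body frame, $\bm u^b(t)$ the control torque, and $\mathbf R_i^b(t)\in SO(3)$ the inertial-to-body rotation matrix, satisfying $\dot{\mathbf R}_i^b=-\mathcal S(\bm\omega^b)\mathbf R_i^b$. $\bm\xi^i(t)$ is the unit vector (in the inertial frame) along the atmosphere–spacecraft relative velocity, with time derivative $\dot{\bm\xi}^i(t)$, and $\bm\eta^b=\mathbf R_i^b\bm\xi^i$. Let $\bm s=[\hat S_1,\hat S_2,\hat S_3]^\top$ be the (positive) areas of the three pairs of faces, $\bm\sigma=\mathrm{diag}(\bm s)$, $\bm m=\mathrm{sgn}(\bm\eta^b)$, $\hat t\ge0$ the start of control, $\hat{\bm m}=\bm m(\hat t)$, and $\bm s_m=\bm\sigma\hat{\bm m}$. The follower's effective surface is $S_f=\bm m^\top\bm\sigma\bm\eta^b$; when $\bm m=\hat{\bm m}$ it satisfies $\dot S_f=(\bm\psi^b)^\top\bm\omega^b+\phi$ with $\bm\psi^b=-\mathcal S(\bm\eta^b)\bm s_m$ and $\phi=\bm s_m^\top\mathbf R_i^b\dot{\bm\xi}^i$.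 The leader's effective surface is a constant $\bar S_l$, and $\Delta S=\bar S_l-S_f$. Orbital setting (linearized relative motion with drag): constants $\nu_f>0$, $w_f>0$, $\bar\beta>0$, $\|\bm\omega_\oplus\|>0$, inclination $\mathscr i_f\in[0,\pi]$, and $\lambda_{\mathscr i}=\bar\beta\bar S_l w_f\|\bm\omega_\oplus\|\cos(\mathscr i_f)$. Define \[ \mathbf A=\begin{bmatrix}0&0&1&0\\0&0&0&1\\3\nu_f^2&-\lambda_{\mathscr i}&-\bar\beta\bar S_l w_f&2\nu_f\\-2\lambda_{\mathscr i}&0&-2\nu_f&-2\bar\beta\bar S_l w_f\end{bmatrix},\qquad \bm b^h=-\bar\beta w_f^2\,[0,0,0,1]^\top . \] The relative state is $\bm x^h=[x^h,y^h,\dot x^h,\dot y^h]^\top$ with reference $\bm x_d^h=[x_d^h,y_d^h,0,0]^\top$; $\bm x_e^h=\bm x^h-\bm x_d^h$. Set $\epsilon_r=y_d^h\lambda_{\mathscr i}/(3\nu_f^2)$, $\overline{\Delta S}=-2\lambda_{\mathscr i}\epsilon_r/(\bar\beta w_f^2)$, $\bm x_{e,ss}^h=[\epsilon_r-x_d^h,0,0,0]^\top$, and $\bm X_e^h=\bm x_e^h-\bm x_{e,ss}^h$. The error dynamics of $\Delta S_e$ and $\bm\omega_e^b$ are those induced by the three displayed differential equations and the definitions of $\Delta S_d$ and $\bm\omega_d^b$. *)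

theory Defs
  imports "HOL-Analysis.Analysis"
begin

definition skew :: "real^3 \<Rightarrow> real^3^3" where
  "skew x = vector [vector [0, -(x$3), x$2],
                    vector [x$3, 0, -(x$1)],
                    vector [-(x$2), x$1, 0]]"

definition outer :: "real^'n \<Rightarrow> real^'m \<Rightarrow> real^'m^'n" where
  "outer u v = (\<chi> i j. u$i * v$j)"

definition diagm :: "real^'n \<Rightarrow> real^'n^'n" where
  "diagm v = (\<chi> i j. if i = j then v$i else 0)"

definition vsgn :: "real^'n \<Rightarrow> real^'n" where
  "vsgn v = (\<chi> i. sgn (v$i))"

definition sym_pd :: "real^'n^'n \<Rightarrow> bool" where
  "sym_pd M \<longleftrightarrow> transpose M = M \<and> (\<forall>x. x \<noteq> 0 \<longrightarrow> 0 < x \<bullet> (M *v x))"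

definition SO3 :: "(real^3^3) set" where
  "SO3 = {R. orthogonal_matrix R \<and> det R = 1}"

definition lam_i :: "real \<Rightarrow> real \<Rightarrow> real \<Rightarrow> real \<Rightarrow> real \<Rightarrow> real \<Rightarrow> real" where
  "lam_i nu w beta Sl wE inc = beta * Sl * w * wE * cos inc"

definition Amat :: "real \<Rightarrow> real \<Rightarrow> real \<Rightarrow> real \<Rightarrow> real \<Rightarrow> real \<Rightarrow> real^4^4" where
  "Amat nu w beta Sl wE inc =
     (let lam = lam_i nu w beta Sl wE inc in
      vector [vector [0, 0, 1, 0],
              vector [0, 0, 0, 1],
              vector [3 * nu^2, -lam, -(beta * Sl * w), 2 * nu],
              vector [-(2 * lam), 0, -(2 * nu), -(2 * beta * Sl * w)]])"

definition bvec :: "real \<Rightarrow> real \<Rightarrow> real^4" where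
  "bvec w beta = vector [0, 0, 0, -(beta * w^2)]"

end

theory Submission
  imports Defs
begin


lemma onorm_mv: "norm ((A::real^'n^'m) *v x) \<le> (real CARD('m) * real CARD('n) * norm A) * norm x"
proof -
  have "norm (A *v x) \<le> onorm ((*v) A) * norm x"
    by (rule onorm) (rule matrix_vector_mul_bounded_linear)
  also have "onorm ((*v) A) \<le> real CARD('m) * real CARD('n) * norm A"
    by (rule onorm_le_matrix_component) (rule order_trans[OF component_le_norm_cart Finite_Cartesian_Product.norm_nth_le])
  finally show ?thesis by (simp add: mult_right_mono)
qed

lemma bb_mv: "bounded_bilinear (\<lambda>(A::real^'n^'m) x. A *v x)"
proof
  fix a a' :: "real^'n^'m" and b b' :: "real^'n" and r :: real
  show "(a + a') *v b = a *v b + a' *v b" by (simp add: algebra_simps)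
  show "a *v (b + b') = a *v b + a *v b'" by (simp add: algebra_simps)
  show "(r *\<^sub>R a) *v b = r *\<^sub>R (a *v b)"
    by (simp add: vec_eq_iff matrix_vector_mult_def sum_distrib_left mult.assoc)
  show "a *v (r *\<^sub>R b) = r *\<^sub>R (a *v b)" by (simp add: algebra_simps)
next
  show "\<exists>K. \<forall>(a::real^'n^'m) b. norm (a *v b) \<le> norm a * norm b * K"
  proof (rule exI[of _ "real CARD('m) * real CARD('n)"], intro allI)
    fix a :: "real^'n^'m" and b :: "real^'n"
    show "norm (a *v b) \<le> norm a * norm b * (real CARD('m) * real CARD('n))"
      using onorm_mv[of a b] by (simp add: mult_ac)
  qed
qed

lemma sym_inner: assumes "transpose M = M" shows "x \<bullet> (M *v y) = y \<bullet> (M *v (x::real^'n))"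
proof -
  have "x \<bullet> (M *v y) = (x v* M) \<bullet> y" by (simp add: dot_lmul_matrix)
  also have "x v* M = transpose M *v x" by simp
  finally show ?thesis using assms by (simp add: inner_commute)
qed

lemma quad_deriv:
  assumes "transpose M = M" "(X has_vector_derivative X') (at t within S)"
  shows "((\<lambda>t. X t \<bullet> ((M::real^'n^'n) *v X t)) has_vector_derivative 2 * (X' \<bullet> (M *v X t))) (at t within S)"
proof -
  have d: "((\<lambda>t. M *v X t) has_vector_derivative M *v X') (at t within S)"
    by (rule bounded_linear.has_vector_derivative[OF matrix_vector_mul_bounded_linear assms(2)])
  have "((\<lambda>t. X t \<bullet> (M *v X t)) has_vector_derivative (X t \<bullet> (M *v X') + X' \<bullet> (M *v X t))) (at t within S)"
    by (rule bounded_bilinear.has_vector_derivative[OF bounded_bilinear_inner assms(2) d])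
  moreover have "X t \<bullet> (M *v X') = X' \<bullet> (M *v X t)" by (rule sym_inner[OF assms(1)])
  ultimately show ?thesis by simp
qed

lemma skew_id: "(a::real^3) \<bullet> (skew w *v e) = (skew e *v a) \<bullet> w"
  by (simp add: skew_def inner_vec_def matrix_vector_mult_def sum_3 vector_3 algebra_simps)

lemma pd_bounds:
  assumes "\<forall>x. x \<noteq> 0 \<longrightarrow> 0 < x \<bullet> ((M::real^'n^'n) *v x)"
  shows "\<exists>a>0. \<forall>x. a * norm x ^ 2 \<le> x \<bullet> (M *v x)"
proof -
  have cont: "continuous_on (sphere 0 1) (\<lambda>x. x \<bullet> (M *v x))"
    by (intro continuous_intros continuous_on_compose2[OF linear_continuous_on[OF matrix_vector_mul_bounded_linear]]) auto
  obtain z where z: "z \<in> sphere (0::real^'n) 1" "\<forall>y\<in>sphere 0 1. z \<bullet> (M *v z) \<le> y \<bullet> (M *v y)"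
    using continuous_attains_inf[OF compact_sphere _ cont] by auto
  have "z \<noteq> 0" using z(1) by auto
  hence pos: "0 < z \<bullet> (M *v z)" using assms by auto
  show ?thesis
  proof (intro exI conjI allI)
    fix x :: "real^'n"
    show "z \<bullet> (M *v z) * norm x ^ 2 \<le> x \<bullet> (M *v x)"
    proof (cases "x = 0")
      case True then show ?thesis by simp
    next
      case False
      let ?y = "(1 / norm x) *\<^sub>R x"
      have "?y \<in> sphere 0 1" using False by simp
      hence "z \<bullet> (M *v z) \<le> ?y \<bullet> (M *v ?y)" using z(2) by blast
      also have "?y \<bullet> (M *v ?y) = (x \<bullet> (M *v x)) / norm x ^ 2"
        by (simp add: matrix_vector_mult_scaleR power2_eq_square)
      finally show ?thesis using False by (simp add: pos_le_divide_eq)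
    qed
  qed (rule pos)
qed

lemma quad_upper: "\<exists>B>0. \<forall>x. x \<bullet> ((M::real^'n^'n) *v x) \<le> B * norm x ^ 2"
proof -
  let ?C = "real CARD('n) * real CARD('n) * norm M"
  have "x \<bullet> (M *v x) \<le> (?C + 1) * norm x ^ 2" for x
  proof -
    have "x \<bullet> (M *v x) \<le> norm x * norm (M *v x)" by (rule norm_cauchy_schwarz)
    also have "\<dots> \<le> norm x * (?C * norm x)" by (intro mult_left_mono onorm_mv) auto
    also have "\<dots> \<le> (?C + 1) * norm x ^ 2" by (simp add: power2_eq_square algebra_simps)
    finally show ?thesis .
  qed
  moreover have "?C + 1 > 0" by (simp add: add_nonneg_pos)
  ultimately show ?thesis by blast
qed



lemma decay:
  fixes V V' :: "real \<Rightarrow> real"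
  assumes d: "\<forall>t\<ge>th. (V has_real_derivative V' t) (at t within {th..})"
    and b: "\<forall>t\<ge>th. V' t \<le> - c * V t"
    and t: "t \<ge> th"
  shows "V t \<le> V th * exp (- c * (t - th))"
proof -
  define W where "W s = exp (c * (s - th)) * V s" for s
  have dW: "(W has_real_derivative exp (c * (s - th)) * (c * V s + V' s)) (at s within {th..})" if "s \<ge> th" for s
  proof -
    have "(W has_real_derivative exp (c * (s - th)) * V' s + (exp (c * (s - th)) * c) * V s) (at s within {th..})"
      unfolding W_def using d that by (auto intro!: derivative_eq_intros)
    then show ?thesis by (simp add: algebra_simps)
  qed
  have "W t \<le> W th"
  proof (rule DERIV_nonpos_imp_decreasing_open[OF t])
    fix s assume s: "th < s" "s < t"
    have "at s within {th..} = at s" by (rule at_within_interior) (use s in simp)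
    hence "(W has_real_derivative exp (c * (s - th)) * (c * V s + V' s)) (at s)" using dW[of s] s by simp
    moreover have "exp (c * (s - th)) * (c * V s + V' s) \<le> 0"
    proof -
      have "V' s \<le> - c * V s" using b s by auto
      then show ?thesis by (intro mult_nonneg_nonpos) auto
    qed
    ultimately show "\<exists>y. (W has_real_derivative y) (at s) \<and> y \<le> 0" by blast
  next
    have "continuous_on {th..} W"
      by (rule continuous_on_vector_derivative) (use dW in \<open>auto simp: has_real_derivative_iff_has_vector_derivative\<close>)
    then show "continuous_on {th..t} W" by (rule continuous_on_subset) auto
  qed
  hence "exp (c * (t - th)) * V t \<le> V th" by (simp add: W_def)
  hence h1: "exp (- c * (t - th)) * (exp (c * (t - th)) * V t) \<le> exp (- c * (t - th)) * V th"
    by (intro mult_left_mono) auto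
  have e: "exp (- c * (t - th)) * (exp (c * (t - th)) * V t) = V t"
    by (simp add: mult.assoc[symmetric] exp_add[symmetric])
  from h1 have "V t \<le> exp (- c * (t - th)) * V th" unfolding e .
  then show ?thesis by (simp add: mult.commute)
qed

lemma exp_lim: "(c::real) > 0 \<Longrightarrow> ((\<lambda>t. exp (- c * (t - th))) \<longlongrightarrow> 0) at_top"
proof -
  assume c: "c > 0"
  have lim1: "filterlim (\<lambda>t. - th + t) at_top at_top"
    by (rule filterlim_tendsto_add_at_top[OF tendsto_const filterlim_ident])
  have "filterlim (\<lambda>t. (- c) * (- th + t)) at_bot at_top"
    using filterlim_tendsto_neg_mult_at_bot[OF tendsto_const[of "- c"] _ lim1] c by simp
  hence "filterlim (\<lambda>t. exp ((- c) * (- th + t))) (nhds 0) at_top"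
    by (rule filterlim_compose[OF exp_at_bot])
  then show ?thesis by simp
qed



lemma diagm_mv: "(diagm s *v v) $ i = s $ i * v $ i"
proof -
  have "(diagm s *v v) $ i = (\<Sum>j\<in>UNIV. (if i = j then s $ i else 0) * v $ j)"
    by (simp add: diagm_def matrix_vector_mult_def)
  also have "\<dots> = (\<Sum>j\<in>UNIV. if j = i then s $ i * v $ j else 0)"
    by (rule sum.cong) auto
  finally show ?thesis by simp
qed

lemma vsgn_diag: "vsgn v \<bullet> (diagm s *v e) = (diagm s *v vsgn v) \<bullet> (e::real^'n)"
  by (simp add: inner_vec_def diagm_mv vsgn_def mult_ac)

lemma outer_mv: "outer u v *v y = (v \<bullet> y) *\<^sub>R (u::real^'n)"
  by (simp add: vec_eq_iff outer_def matrix_vector_mult_def inner_vec_def sum_distrib_left mult_ac)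

lemma trans_inner: "x \<bullet> (transpose A *v y) = (A *v x) \<bullet> (y::real^'n)"
  by (metis dot_lmul_matrix inner_commute transpose_matrix_vector)

lemma vector_4 [simp]:
  "(vector [x,y,z,u] ::('a::zero)^4)$1 = x"
  "(vector [x,y,z,u] ::('a::zero)^4)$2 = y"
  "(vector [x,y,z,u] ::('a::zero)^4)$3 = z"
  "(vector [x,y,z,u] ::('a::zero)^4)$4 = u"
  unfolding vector_def by simp_all


theorem proposition1:
  fixes nu w beta wE inc Sl xd yd Rf ks th :: real
    and s :: "real^3" and J K :: "real^3^3"
    and Q P :: "real^4^4" and g :: "real^4"
    and xi xi' :: "real \<Rightarrow> real^3"
  assumes "lam = lam_i nu w beta Sl wE inc"
    and "A = Amat nu w beta Sl wE inc"
    and "b = bvec w beta"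
    and "er = yd * lam / (3 * nu^2)"
    and "dSbar = - 2 * lam * er / (beta * w^2)"
    and "xdv = (vector [xd, yd, 0, 0] :: real^4)"
    and "xss = (vector [er - xd, 0, 0, 0] :: real^4)"
    and "Ac = A - outer b g"
  assumes nu_pos: "nu > 0" and w_pos: "w > 0" and beta_pos: "beta > 0" and wE_pos: "wE > 0"
    and inc: "0 \<le> inc" "inc \<le> pi"
    and s_pos: "\<forall>k. s$k > 0"
    and J_pd: "sym_pd J"
    and Q_pd: "sym_pd Q" and Rf_pos: "Rf > 0"
    and P_pd: "sym_pd P"
    and ARE: "transpose A ** P + P ** A - (1 / Rf) *\<^sub>R (P ** outer b b ** P) + Q = 0"
    and g_def: "g = (1 / Rf) *\<^sub>R (P *v b)"
    and ks_pos: "ks > 0"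
    and K_pd: "sym_pd K"
    and th_nonneg: "th \<ge> 0"
    and xi_unit: "\<forall>t\<ge>th. norm (xi t) = 1"
    and xi_deriv: "\<forall>t\<ge>th. (xi has_vector_derivative xi' t) (at t within {th..})"
  assumes "eta = (\<lambda>(Rm :: real \<Rightarrow> real^3^3) t. Rm t *v xi t)"
    and "sm = (\<lambda>Rm. diagm s *v vsgn (eta Rm th))"
    and "dS = (\<lambda>Rm t. Sl - vsgn (eta Rm t) \<bullet> (diagm s *v eta Rm t))"
    and "psi = (\<lambda>Rm t. - (skew (eta Rm t) *v sm Rm))"
    and "phi = (\<lambda>Rm t. sm Rm \<bullet> (Rm t *v xi' t))"
    and "Xe = (\<lambda>(x :: real \<Rightarrow> real^4) t. x t - xdv - xss)"
    and "dSe = (\<lambda>x Rm t. dS Rm t - (- (g \<bullet> Xe x t) + dSbar))"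
    and "Lam = (\<lambda>x Rm t. - phi Rm t + (b \<bullet> (P *v Xe x t) + g \<bullet> (Ac *v Xe x t))
                          + (g \<bullet> b) * dSe x Rm t)"
    and "ome = (\<lambda>(om :: real \<Rightarrow> real^3) omd t. om t - omd t)"
    and "u = (\<lambda>x Rm om omd (omd' :: real \<Rightarrow> real^3) t.
               - (skew (J *v om t) *v om t) + J *v omd' t + dSe x Rm t *\<^sub>R psi Rm t
               - K *v ome om omd t)"
    and "Traj = (\<lambda>x Rm om om' omd omd'.
           (\<forall>t\<ge>th. Rm t \<in> SO3)
         \<and> (\<forall>t\<ge>th. vsgn (eta Rm t) = vsgn (eta Rm th))
         \<and> (\<forall>t\<ge>th. (Rm has_vector_derivative - (skew (om t) ** Rm t)) (at t within {th..}))
         \<and> (\<forall>t\<ge>th. (Xe x has_vector_derivative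
                      (A *v Xe x t + A *v (xdv + xss) + dS Rm t *\<^sub>R b)) (at t within {th..}))
         \<and> (\<forall>t\<ge>th. (om has_vector_derivative om' t) (at t within {th..})
                    \<and> J *v om' t = skew (J *v om t) *v om t + u x Rm om omd omd' t)
         \<and> (\<forall>t\<ge>th. (omd has_vector_derivative omd' t) (at t within {th..}))
         \<and> (\<forall>t\<ge>th. Lam x Rm t - psi Rm t \<bullet> omd t + ks * dSe x Rm t = 0))"
    and "Z = (\<lambda>x Rm om omd t. (Xe x t, dSe x Rm t, ome om omd t))"
  shows "(\<forall>\<epsilon>>0. \<exists>\<delta>>0. \<forall>x Rm om om' omd omd'.
            Traj x Rm om om' omd omd' \<and> norm (Z x Rm om omd th) < \<delta>
            \<longrightarrow> (\<forall>t\<ge>th. norm (Z x Rm om omd t) < \<epsilon>))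
       \<and> (\<exists>r>0. \<forall>x Rm om om' omd omd'.
            Traj x Rm om om' omd omd' \<and> norm (Z x Rm om omd th) < r
            \<longrightarrow> ((Z x Rm om omd) \<longlongrightarrow> 0) at_top)"
proof -
  have Jsym: "transpose J = J" and Jpos: "\<forall>x. x \<noteq> 0 \<longrightarrow> 0 < x \<bullet> (J *v x)" using J_pd sym_pd_def by auto
  have Psym: "transpose P = P" and Ppos: "\<forall>x. x \<noteq> 0 \<longrightarrow> 0 < x \<bullet> (P *v x)" using P_pd sym_pd_def by auto
  have Qpos: "\<forall>x. x \<noteq> 0 \<longrightarrow> 0 < x \<bullet> (Q *v x)" using Q_pd sym_pd_def by auto
  have Kpos: "\<forall>x. x \<noteq> 0 \<longrightarrow> 0 < x \<bullet> (K *v x)" using K_pd sym_pd_def by auto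
  obtain pP where pP: "pP > 0" "\<forall>x. pP * norm x ^ 2 \<le> x \<bullet> (P *v x)" using pd_bounds[OF Ppos] by blast
  obtain PP where PP: "PP > 0" "\<forall>x. x \<bullet> (P *v x) \<le> PP * norm x ^ 2" using quad_upper by blast
  obtain pJ where pJ: "pJ > 0" "\<forall>x. pJ * norm x ^ 2 \<le> x \<bullet> (J *v x)" using pd_bounds[OF Jpos] by blast
  obtain JJ where JJ: "JJ > 0" "\<forall>x. x \<bullet> (J *v x) \<le> JJ * norm x ^ 2" using quad_upper by blast
  obtain qQ where qQ: "qQ > 0" "\<forall>x. qQ * norm x ^ 2 \<le> x \<bullet> (Q *v x)" using pd_bounds[OF Qpos] by blast
  obtain kK where kK: "kK > 0" "\<forall>x. kK * norm x ^ 2 \<le> x \<bullet> (K *v x)" using pd_bounds[OF Kpos] by blast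
  define m1 where "m1 = min pP (min 1 pJ)"
  define M1 where "M1 = max PP (max 1 JJ)"
  define c0 where "c0 = min qQ (min (2 * ks) (2 * kK))"
  define c where "c = c0 / M1"
  have m1: "0 < m1" "m1 \<le> pP" "m1 \<le> 1" "m1 \<le> pJ" using pP pJ by (auto simp: m1_def)
  have M1: "PP \<le> M1" "1 \<le> M1" "JJ \<le> M1" by (auto simp: M1_def)
  have c0: "0 < c0" "c0 \<le> qQ" "c0 \<le> 2 * ks" "c0 \<le> 2 * kK" using qQ kK ks_pos by (auto simp: c0_def)
  have cpos: "c > 0" using c0 M1 by (simp add: c_def)
  have hx: "A *v (xdv + xss) = - (dSbar *\<^sub>R b)"
  proof -
    have e1: "3 * nu^2 * er = yd * lam" using nu_pos by (simp add: assms(4))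
    have e2: "dSbar * (beta * w^2) = - 2 * lam * er" using beta_pos w_pos by (simp add: assms(5))
    show ?thesis using e1 e2
      by (simp add: assms(2,3,6,7) assms(1)[symmetric] Amat_def bvec_def Let_def vec_eq_iff forall_4
          matrix_vector_mult_def sum_4 vector_4 algebra_simps)
  qed
  have hare: "2 * ((A *v X) \<bullet> (P *v X)) = (1 / Rf) * (b \<bullet> (P *v X))^2 - X \<bullet> (Q *v X)" for X
  proof -
    have "X \<bullet> ((transpose A ** P + P ** A - (1 / Rf) *\<^sub>R (P ** outer b b ** P) + Q) *v X) = 0"
      using ARE by simp
    moreover have "X \<bullet> ((transpose A ** P) *v X) = (A *v X) \<bullet> (P *v X)"
      by (metis matrix_vector_mul_assoc trans_inner)
    moreover have "X \<bullet> ((P ** A) *v X) = (A *v X) \<bullet> (P *v X)"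
      by (simp add: matrix_vector_mul_assoc[symmetric] sym_inner[OF Psym])
    moreover have "X \<bullet> ((P ** outer b b ** P) *v X) = (b \<bullet> (P *v X))^2"
      by (simp add: matrix_vector_mul_assoc[symmetric] sym_inner[OF Psym, of X] outer_mv power2_eq_square inner_commute)
    moreover have "((1 / Rf) *\<^sub>R M) *v X = (1 / Rf) *\<^sub>R (M *v X)" for M :: "real^4^4"
      by (simp add: vec_eq_iff matrix_vector_mult_def sum_distrib_left mult.assoc)
    ultimately show ?thesis
      by (simp add: algebra_simps inner_diff_right inner_add_right)
  qed
  have hg: "g \<bullet> X = (1 / Rf) * (b \<bullet> (P *v X))" for X
    using sym_inner[OF Psym, of X b] by (simp add: g_def inner_commute)
  have hAc: "Ac *v X = A *v X - (g \<bullet> X) *\<^sub>R b" for X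
    by (simp add: assms(8) outer_mv algebra_simps)
  have key: "norm (Z x Rm om omd t)^2 \<le> (M1 / m1) * norm (Z x Rm om omd th)^2 * exp (- c * (t - th))"
    if T: "Traj x Rm om om' omd omd'" and t: "t \<ge> th" for x Rm om om' omd omd' t
  proof -
    note T0 = T[unfolded assms(37)]
    have sgnc: "\<forall>r\<ge>th. vsgn (eta Rm r) = vsgn (eta Rm th)" using T0 by (elim conjE) assumption
    have Rd: "\<forall>r\<ge>th. (Rm has_vector_derivative - (skew (om r) ** Rm r)) (at r within {th..})"
      using T0 by (elim conjE) assumption
    have Xd: "\<forall>r\<ge>th. (Xe x has_vector_derivative
                      (A *v Xe x r + A *v (xdv + xss) + dS Rm r *\<^sub>R b)) (at r within {th..})"
      using T0 by (elim conjE) assumption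
    have omD: "\<forall>r\<ge>th. (om has_vector_derivative om' r) (at r within {th..})
                    \<and> J *v om' r = skew (J *v om r) *v om r + u x Rm om omd omd' r"
      using T0 by (elim conjE) assumption
    have omdD: "\<forall>r\<ge>th. (omd has_vector_derivative omd' r) (at r within {th..})"
      using T0 by (elim conjE) assumption
    have cons: "\<forall>r\<ge>th. Lam x Rm r - psi Rm r \<bullet> omd r + ks * dSe x Rm r = 0"
      using T0 by (elim conjE) assumption
    define X where "X = Xe x"
    define E where "E = dSe x Rm"
    define W where "W = ome om omd"
    define sv where "sv = sm Rm"
    have Eeq: "E r = dS Rm r + g \<bullet> X r - dSbar" for r by (simp add: E_def X_def assms(33))
    have Weq: "W r = om r - omd r" for r by (simp add: W_def assms(35))
    have Zeq: "Z x Rm om omd r = (X r, E r, W r)" for r by (simp add: assms(38) X_def E_def W_def)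
    have svd: "sv = diagm s *v vsgn (eta Rm th)" by (simp add: sv_def assms(28))
    have psieq: "psi Rm r = - (skew (Rm r *v xi r) *v sv)" for r by (simp add: assms(30) assms(27) sv_def)
    have phieq: "phi Rm r = sv \<bullet> (Rm r *v xi' r)" for r by (simp add: assms(31) sv_def)
    have dSeq: "dS Rm r = Sl - sv \<bullet> (Rm r *v xi r)" if "r \<ge> th" for r
    proof -
      have e: "vsgn (eta Rm r) = vsgn (eta Rm th)" using sgnc that by blast
      have "dS Rm r = Sl - vsgn (eta Rm r) \<bullet> (diagm s *v eta Rm r)" by (simp add: assms(29))
      also have "\<dots> = Sl - vsgn (eta Rm th) \<bullet> (diagm s *v eta Rm r)" by (simp only: e)
      also have "\<dots> = Sl - sv \<bullet> (Rm r *v xi r)" by (simp add: svd vsgn_diag assms(27))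
      finally show ?thesis .
    qed
    have ddS: "((\<lambda>q. dS Rm q) has_vector_derivative (- phi Rm r - psi Rm r \<bullet> om r)) (at r within {th..})"
      if r: "r \<ge> th" for r
    proof -
      have de: "((\<lambda>q. Rm q *v xi q) has_vector_derivative (Rm r *v xi' r + (- (skew (om r) ** Rm r)) *v xi r)) (at r within {th..})"
        by (rule bounded_bilinear.has_vector_derivative[OF bb_mv]) (use Rd xi_deriv r in auto)
      have d2: "((\<lambda>q. Sl - sv \<bullet> (Rm q *v xi q)) has_vector_derivative (0 - sv \<bullet> (Rm r *v xi' r + (- (skew (om r) ** Rm r)) *v xi r))) (at r within {th..})"
        by (intro has_vector_derivative_diff has_vector_derivative_const bounded_linear.has_vector_derivative[OF bounded_linear_inner_right de])
      have neg: "(- M) *v v = - (M *v v)" for M :: "real^3^3" and v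
        by (simp add: vec_eq_iff matrix_vector_mult_def sum_negf)
      have alg: "0 - sv \<bullet> (Rm r *v xi' r + (- (skew (om r) ** Rm r)) *v xi r) = - phi Rm r - psi Rm r \<bullet> om r"
        using skew_id[of sv "om r" "Rm r *v xi r"]
        by (simp add: neg phieq psieq inner_add_right inner_diff_right matrix_vector_mul_assoc[symmetric])
      show ?thesis
        by (rule has_vector_derivative_transform_within[OF d2[unfolded alg], of 1]) (use r dSeq in auto)
    qed
    have dX: "(X has_vector_derivative (Ac *v X r + E r *\<^sub>R b)) (at r within {th..})" if r: "r \<ge> th" for r
    proof -
      have e: "dS Rm r = E r - g \<bullet> X r + dSbar" using Eeq[of r] by simp
      have "A *v X r + A *v (xdv + xss) + dS Rm r *\<^sub>R b = A *v X r + (A *v (xdv + xss) + dSbar *\<^sub>R b) + (E r *\<^sub>R b - (g \<bullet> X r) *\<^sub>R b)"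
        by (simp add: e algebra_simps)
      also have "\<dots> = Ac *v X r + E r *\<^sub>R b" by (simp add: hx hAc)
      finally have "A *v X r + A *v (xdv + xss) + dS Rm r *\<^sub>R b = Ac *v X r + E r *\<^sub>R b" .
      moreover have "(Xe x has_vector_derivative (A *v Xe x r + A *v (xdv + xss) + dS Rm r *\<^sub>R b)) (at r within {th..})"
        using Xd r by blast
      ultimately show ?thesis by (simp add: X_def)
    qed
    have dE: "(E has_vector_derivative (- (psi Rm r \<bullet> W r) - ks * E r - b \<bullet> (P *v X r))) (at r within {th..})"
      if r: "r \<ge> th" for r
    proof -
      have Ef: "E = (\<lambda>q. dS Rm q + g \<bullet> X q - dSbar)" using Eeq by auto
      have d1: "(E has_vector_derivative ((- phi Rm r - psi Rm r \<bullet> om r) + g \<bullet> (Ac *v X r + E r *\<^sub>R b) - 0)) (at r within {th..})"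
        unfolding Ef
        by (intro has_vector_derivative_diff has_vector_derivative_add has_vector_derivative_const ddS r
            bounded_linear.has_vector_derivative[OF bounded_linear_inner_right dX[OF r, unfolded Ef]])
      have c1: "Lam x Rm r - psi Rm r \<bullet> omd r + ks * E r = 0" using cons r by (simp add: E_def)
      have L1: "Lam x Rm r = - phi Rm r + (b \<bullet> (P *v X r) + g \<bullet> (Ac *v X r)) + (g \<bullet> b) * E r"
        by (simp add: assms(34) X_def E_def)
      have "(- phi Rm r - psi Rm r \<bullet> om r) + g \<bullet> (Ac *v X r + E r *\<^sub>R b) - 0
            = - (psi Rm r \<bullet> W r) - ks * E r - b \<bullet> (P *v X r)"
        using c1 L1 by (simp add: Weq inner_diff_right inner_add_right algebra_simps)
      then show ?thesis using d1 by simp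
    qed
    have dW: "(W has_vector_derivative (om' r - omd' r)) (at r within {th..})" if r: "r \<ge> th" for r
    proof -
      have "W = (\<lambda>q. om q - omd q)" using Weq by auto
      then show ?thesis using omD omdD r by (auto intro!: has_vector_derivative_diff)
    qed
    have JW: "J *v (om' r - omd' r) = E r *\<^sub>R psi Rm r - K *v W r" if r: "r \<ge> th" for r
    proof -
      have "J *v om' r = skew (J *v om r) *v om r + u x Rm om omd omd' r" using omD r by simp
      also have "u x Rm om omd omd' r = - (skew (J *v om r) *v om r) + J *v omd' r + E r *\<^sub>R psi Rm r - K *v W r"
        by (simp add: assms(36) E_def W_def)
      finally show ?thesis by (simp add: matrix_vector_mult_diff_distrib)
    qed
    define V where "V q = X q \<bullet> (P *v X q) + E q * E q + W q \<bullet> (J *v W q)" for q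
    define V' where "V' q = - (X q \<bullet> (Q *v X q)) - (1 / Rf) * (b \<bullet> (P *v X q))^2 - 2 * ks * (E q * E q) - 2 * (W q \<bullet> (K *v W q))" for q
    define nz where "nz q = norm (X q)^2 + E q * E q + norm (W q)^2" for q
    have dV: "(V has_real_derivative V' r) (at r within {th..})" if r: "r \<ge> th" for r
    proof -
      let ?E' = "- (psi Rm r \<bullet> W r) - ks * E r - b \<bullet> (P *v X r)"
      have d: "(V has_vector_derivative (2 * ((Ac *v X r + E r *\<^sub>R b) \<bullet> (P *v X r)) + (E r * ?E' + ?E' * E r)
                + 2 * ((om' r - omd' r) \<bullet> (J *v W r)))) (at r within {th..})"
        unfolding V_def
        by (intro has_vector_derivative_add quad_deriv[OF Psym dX[OF r]] quad_deriv[OF Jsym dW[OF r]]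
             has_vector_derivative_mult dE[OF r])
      have a1: "(Ac *v X r + E r *\<^sub>R b) \<bullet> (P *v X r) = (A *v X r) \<bullet> (P *v X r) - (g \<bullet> X r) * (b \<bullet> (P *v X r)) + E r * (b \<bullet> (P *v X r))"
        by (simp add: hAc inner_add_left inner_diff_left)
      have a2: "(om' r - omd' r) \<bullet> (J *v W r) = E r * (psi Rm r \<bullet> W r) - W r \<bullet> (K *v W r)"
        using sym_inner[OF Jsym, of "om' r - omd' r" "W r"] JW[OF r]
        by (simp add: inner_diff_right inner_commute)
      have "2 * ((Ac *v X r + E r *\<^sub>R b) \<bullet> (P *v X r)) + (E r * ?E' + ?E' * E r)
                + 2 * ((om' r - omd' r) \<bullet> (J *v W r)) = V' r"
        unfolding a1 a2 V'_def using hare[of "X r"] hg[of "X r"]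
        by (simp add: algebra_simps power2_eq_square)
      then show ?thesis using d by (simp add: has_real_derivative_iff_has_vector_derivative)
    qed
    have Vup: "V q \<le> M1 * nz q" for q
    proof -
      have "X q \<bullet> (P *v X q) \<le> M1 * norm (X q)^2"
        using PP(2) M1(1) by (meson order_trans mult_right_mono zero_le_power2)
      moreover have "W q \<bullet> (J *v W q) \<le> M1 * norm (W q)^2"
        using JJ(2) M1(3) by (meson order_trans mult_right_mono zero_le_power2)
      moreover have "E q * E q \<le> M1 * (E q * E q)"
        using M1(2) by (simp add: mult_le_cancel_right1)
      ultimately show ?thesis by (simp add: V_def nz_def algebra_simps)
    qed
    have Vlo: "m1 * nz q \<le> V q" for q
    proof -
      have "m1 * norm (X q)^2 \<le> X q \<bullet> (P *v X q)"
        using pP(2) m1(2) by (meson order_trans mult_right_mono zero_le_power2)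
      moreover have "m1 * norm (W q)^2 \<le> W q \<bullet> (J *v W q)"
        using pJ(2) m1(4) by (meson order_trans mult_right_mono zero_le_power2)
      moreover have "m1 * (E q * E q) \<le> E q * E q"
        by (rule mult_left_le_one_le) (use m1 in auto)
      ultimately show ?thesis by (simp add: V_def nz_def algebra_simps)
    qed
    have bV: "V' r \<le> - c * V r" if r: "r \<ge> th" for r
    proof -
      have "qQ * norm (X r)^2 \<le> X r \<bullet> (Q *v X r)" using qQ by blast
      moreover have "kK * norm (W r)^2 \<le> W r \<bullet> (K *v W r)" using kK by blast
      moreover have "0 \<le> (1 / Rf) * (b \<bullet> (P *v X r))^2" using Rf_pos by simp
      ultimately have "V' r \<le> - (qQ * norm (X r)^2 + 2 * ks * (E r * E r) + 2 * kK * norm (W r)^2)"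
        by (simp add: V'_def)
      also have "\<dots> \<le> - (c0 * nz r)"
      proof -
        have "c0 * norm (X r)^2 \<le> qQ * norm (X r)^2" using c0 by (simp add: mult_right_mono)
        moreover have "c0 * (E r * E r) \<le> 2 * ks * (E r * E r)" using c0 by (simp add: mult_right_mono)
        moreover have "c0 * norm (W r)^2 \<le> 2 * kK * norm (W r)^2" using c0 by (simp add: mult_right_mono)
        ultimately show ?thesis by (simp add: nz_def algebra_simps)
      qed
      also have "- (c0 * nz r) \<le> - c * V r"
      proof -
        have "c * V r \<le> c * (M1 * nz r)" using Vup cpos by (simp add: mult_left_mono)
        also have "\<dots> = c0 * nz r" using M1 by (simp add: c_def)
        finally show ?thesis by simp
      qed
      finally show ?thesis .
    qed
    have dec: "V t \<le> V th * exp (- c * (t - th))"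
      by (rule decay[of th V V' c t]) (use dV bV t in auto)
    have nZ: "norm (Z x Rm om omd q)^2 = nz q" for q
      by (simp add: Zeq nz_def norm_Pair power2_eq_square)
    have "m1 * nz t \<le> V th * exp (- c * (t - th))" using Vlo[of t] dec by linarith
    also have "\<dots> \<le> M1 * nz th * exp (- c * (t - th))" using Vup[of th] by (simp add: mult_right_mono)
    finally have "m1 * nz t \<le> M1 * nz th * exp (- c * (t - th))" .
    then have "nz t \<le> (M1 * nz th * exp (- c * (t - th))) / m1" using m1(1) by (simp add: pos_le_divide_eq mult.commute)
    then show ?thesis by (simp add: nZ)
  qed
  define R where "R = M1 / m1"
  have R1: "R \<ge> 1" using m1 M1 by (simp add: R_def)
  have key': "norm (Z x Rm om omd t)^2 \<le> R * norm (Z x Rm om omd th)^2 * exp (- c * (t - th))"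
    if "Traj x Rm om om' omd omd'" "t \<ge> th" for x Rm om om' omd omd' t
    using key[OF that] by (simp add: R_def)
  show ?thesis
  proof
    show "\<forall>\<epsilon>>0. \<exists>\<delta>>0. \<forall>x Rm om om' omd omd'.
            Traj x Rm om om' omd omd' \<and> norm (Z x Rm om omd th) < \<delta>
            \<longrightarrow> (\<forall>t\<ge>th. norm (Z x Rm om omd t) < \<epsilon>)"
    proof (intro allI impI)
      fix \<epsilon> :: real assume e: "\<epsilon> > 0"
      show "\<exists>\<delta>>0. \<forall>x Rm om om' omd omd'.
            Traj x Rm om om' omd omd' \<and> norm (Z x Rm om omd th) < \<delta>
            \<longrightarrow> (\<forall>t\<ge>th. norm (Z x Rm om omd t) < \<epsilon>)"
      proof (intro exI[of _ "\<epsilon> / R"] conjI allI impI)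
        show "\<epsilon> / R > 0" using e R1 by simp
        fix x Rm om om' omd omd' t
        assume H: "Traj x Rm om om' omd omd' \<and> norm (Z x Rm om omd th) < \<epsilon> / R" and t: "t \<ge> th"
        have ex: "exp (- c * (t - th)) \<le> 1" using cpos t by simp
        have "norm (Z x Rm om omd t)^2 \<le> R * norm (Z x Rm om omd th)^2 * exp (- c * (t - th))"
          using key' H t by blast
        also have "\<dots> \<le> R * norm (Z x Rm om omd th)^2"
          using ex R1 by (simp add: mult_left_le)
        also have "\<dots> < R * (\<epsilon> / R)^2"
          using H R1 by (intro mult_strict_left_mono power_strict_mono) auto
        also have "\<dots> = \<epsilon>^2 / R" using R1 by (simp add: power2_eq_square)
        also have "\<dots> \<le> \<epsilon>^2" using R1 by (simp add: divide_le_eq mult_le_cancel_left1)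
        finally have "norm (Z x Rm om omd t)^2 < \<epsilon>^2" .
        then show "norm (Z x Rm om omd t) < \<epsilon>" using e by (simp add: power2_less_imp_less)
      qed
    qed
  next
    show "\<exists>r>0. \<forall>x Rm om om' omd omd'.
            Traj x Rm om om' omd omd' \<and> norm (Z x Rm om omd th) < r
            \<longrightarrow> ((Z x Rm om omd) \<longlongrightarrow> 0) at_top"
    proof (intro exI[of _ 1] conjI allI impI)
      fix x Rm om om' omd omd'
      assume H: "Traj x Rm om om' omd omd' \<and> norm (Z x Rm om omd th) < 1"
      let ?f = "\<lambda>t. R * norm (Z x Rm om omd th)^2 * exp (- c * (t - th))"
      have l1: "(?f \<longlongrightarrow> 0) at_top"
        using tendsto_mult[OF tendsto_const[of "R * norm (Z x Rm om omd th)^2"] exp_lim[OF cpos, of th]] by simp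
      have l2: "((\<lambda>t. norm (Z x Rm om omd t)^2) \<longlongrightarrow> 0) at_top"
      proof (rule tendsto_sandwich[OF _ _ tendsto_const l1])
        show "\<forall>\<^sub>F t in at_top. 0 \<le> norm (Z x Rm om omd t)^2" by simp
        show "\<forall>\<^sub>F t in at_top. norm (Z x Rm om omd t)^2 \<le> ?f t"
          unfolding eventually_at_top_linorder using key' H by blast
      qed
      have "((\<lambda>t. sqrt (norm (Z x Rm om omd t)^2)) \<longlongrightarrow> sqrt 0) at_top"
        by (rule tendsto_real_sqrt[OF l2])
      hence "((\<lambda>t. norm (Z x Rm om omd t)) \<longlongrightarrow> 0) at_top" by simp
      then show "((Z x Rm om omd) \<longlongrightarrow> 0) at_top" by (rule tendsto_norm_zero_cancel)
    qed simp
  qed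
qed

end
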